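(* Let $(c_n)_{n\in\mathbb N}$ be positive integers; for each $n$ let $A_n,B_n\in M_{c_{n+1},c_n}(\mathbb Z_+)$ be proper matrices and $T_n\in M_{c_n}(\mathbb Z_+)$ a proper diagonal matrix with $A_nT_n=T_{n+1}B_n$ for all $n$. Then there is a rank-2 Bratteli diagram $\Lambda$ of infinite depth whose associated data is $c_n,A_n,B_n,T_n$ and such that for every blue edge $e$ with $r(e)\in V_{n,j}$ and $s(e)\in V_{n+1,i}$ we have $o(e)=A_n(i,j)\,|V_{n,j}|$.
   Context: A $2$-graph is a countable category $\Lambda$ with a functor $d:\Lambda\to\mathbb N^2$ satisfying unique factorisation (if $d(\lambda)=m+n$ there are unique $\mu,\nu$ with $d(\mu)=m,d(\nu)=n,\lambda=\mu\nu$). Vertices $\Lambda^0$ = degree-$0$ paths; $r,s$ range/source; $\Lambda^n=d^{-1}(n)$; $e_1=(1,0),e_2=(0,1)$; $VEW=\{\lambda\in E:r(\lambda)\in V,s(\lambda)\in W\}$. Row-finite: each $v\Lambda^n$ finite. Blue paths: degree in $\mathbb Ne_1$ (edges $\Lambda^{e_1}$); red paths: degree in $\mathbb Ne_2$ (edges $\Lambda^{e_2}$). $\lambda(m,n)$ is the unique path with $\lambda=\lambda'\lambda(m,n)\lambda''$, $d(\lambda')=m$, $d(\lambda(m,n))=n-m$; $\lambda(n)=\lambda(n,n)$. A cycle: $d(\lambda)\ne0$, $r(\lambda)=s(\lambda)$, $\lambda(n)\ne s(\lambda)$ for $0<n<d(\lambda)$; isolated: no $n\le d(\lambda)$ with $r(\lambda)\Lambda^n\setminus\{\lambda(0,n)\}\ne\emptyset$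 and no $n\le d(\lambda)$ with $\Lambda^ns(\lambda)\setminus\{\lambda(d(\lambda)-n,d(\lambda))\}\ne\emptyset$. A rank-2 Bratteli diagram of infinite depth is a row-finite 2-graph with $\Lambda^0=\bigsqcup_{n\in\mathbb N}V_n$, each $V_n$ nonempty finite, such that every blue edge $e$ has $r(e)\in V_n$, $s(e)\in V_{n+1}$ for some $n$; every $v$ with $\Lambda^{e_1}v=\emptyset$ lies in $V_0$; every vertex receives a blue edge; every vertex lies on an isolated cycle of red edges; and every red edge has range and source in the same $V_n$. Write $V_n=\bigsqcup_{j=1}^{c_n}V_{n,j}$ with $V_{n,j}$ the vertex sets of the distinct isolated red cycles in $V_n$; the associated data are $c_n$, $A_n(i,j)=|v\Lambda^{e_1}V_{n+1,i}|$ ($v\in V_{n,j}$), $B_n(i,j)=|V_{n,j}\Lambda^{e_1}w|$ ($w\in V_{n+1,i}$), and $T_n=\mathrm{diag}(|V_{n,1}|,\dots,|V_{n,c_n}|)$ (these are independent of the choices). For a blue path $\alpha$, let $f$ be the unique red edge with $s(f)=r(\alpha)$ and $\mathcal F(\alpha)$ the unique blue path with $f\alpha=\mathcal F(\alpha)f'$ for a red edge $f'$; $o(\alpha)=\min\{k>0:\mathcal F^k(\alpha)=\alpha\}$. An integer matrix is proper if its entries are nonnegative and every row and column has a nonzero entry. *)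

theory Defs
  imports Main "HOL-Library.Product_Order" "HOL-Library.Product_Plus" "HOL-Library.Countable_Set"
begin

text \<open>A 2-graph is encoded as a small category whose morphisms ("paths") form a set P of
elements of some type 'p.  Objects are identified with their identity morphisms:
r a and s a are the identity morphisms at the range and source of a.  The composition
is c (partial: meaningful when s a = r b), and d is the degree functor into nat x nat
(with componentwise order and addition).\<close>

definition two_graph ::
  "'p set \<Rightarrow> ('p \<Rightarrow> 'p) \<Rightarrow> ('p \<Rightarrow> 'p) \<Rightarrow> ('p \<Rightarrow> 'p \<Rightarrow> 'p) \<Rightarrow> ('p \<Rightarrow> nat \<times> nat) \<Rightarrow> bool" where
  "two_graph P r s c d \<longleftrightarrow>
     countable P \<and>
     (\<forall>a\<in>P. r a \<in> P \<and> s a \<in> P \<and> r (r a) = r a \<and> s (r a) = r a \<and> r (s a) = s a \<and> s (s a) = s a) \<and>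
     (\<forall>a\<in>P. c (r a) a = a \<and> c a (s a) = a) \<and>
     (\<forall>a\<in>P. \<forall>b\<in>P. s a = r b \<longrightarrow> c a b \<in> P \<and> r (c a b) = r a \<and> s (c a b) = s b) \<and>
     (\<forall>a\<in>P. \<forall>b\<in>P. \<forall>e\<in>P. s a = r b \<and> s b = r e \<longrightarrow> c (c a b) e = c a (c b e)) \<and>
     (\<forall>a\<in>P. d (r a) = 0) \<and>
     (\<forall>a\<in>P. \<forall>b\<in>P. s a = r b \<longrightarrow> d (c a b) = d a + d b) \<and>
     (\<forall>l\<in>P. \<forall>m n. d l = m + n \<longrightarrow>
        (\<exists>!q. fst q \<in> P \<and> snd q \<in> P \<and> s (fst q) = r (snd q) \<and>
               d (fst q) = m \<and> d (snd q) = n \<and> c (fst q) (snd q) = l))"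

definition verts :: "'p set \<Rightarrow> ('p \<Rightarrow> nat \<times> nat) \<Rightarrow> 'p set" where
  "verts P d = {a\<in>P. d a = 0}"

definition row_finite ::
  "'p set \<Rightarrow> ('p \<Rightarrow> 'p) \<Rightarrow> ('p \<Rightarrow> nat \<times> nat) \<Rightarrow> bool" where
  "row_finite P r d \<longleftrightarrow> (\<forall>v\<in>verts P d. \<forall>n. finite {a\<in>P. r a = v \<and> d a = n})"

definition seg ::
  "'p set \<Rightarrow> ('p \<Rightarrow> 'p) \<Rightarrow> ('p \<Rightarrow> 'p) \<Rightarrow> ('p \<Rightarrow> 'p \<Rightarrow> 'p) \<Rightarrow> ('p \<Rightarrow> nat \<times> nat)
    \<Rightarrow> 'p \<Rightarrow> nat \<times> nat \<Rightarrow> nat \<times> nat \<Rightarrow> 'p" where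
  "seg P r s c d l m n = (THE \<mu>. \<mu> \<in> P \<and> (\<exists>a\<in>P. \<exists>b\<in>P.
      d a = m \<and> d \<mu> = n - m \<and> d b = d l - n \<and> s a = r \<mu> \<and> s \<mu> = r b \<and> c (c a \<mu>) b = l))"

definition pt ::
  "'p set \<Rightarrow> ('p \<Rightarrow> 'p) \<Rightarrow> ('p \<Rightarrow> 'p) \<Rightarrow> ('p \<Rightarrow> 'p \<Rightarrow> 'p) \<Rightarrow> ('p \<Rightarrow> nat \<times> nat)
    \<Rightarrow> 'p \<Rightarrow> nat \<times> nat \<Rightarrow> 'p" where
  "pt P r s c d l n = seg P r s c d l n n"

definition is_cycle ::
  "'p set \<Rightarrow> ('p \<Rightarrow> 'p) \<Rightarrow> ('p \<Rightarrow> 'p) \<Rightarrow> ('p \<Rightarrow> 'p \<Rightarrow> 'p) \<Rightarrow> ('p \<Rightarrow> nat \<times> nat) \<Rightarrow> 'p \<Rightarrow> bool" where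
  "is_cycle P r s c d l \<longleftrightarrow> l \<in> P \<and> d l \<noteq> 0 \<and> r l = s l \<and>
     (\<forall>n. 0 < n \<and> n < d l \<longrightarrow> pt P r s c d l n \<noteq> s l)"

definition isolated ::
  "'p set \<Rightarrow> ('p \<Rightarrow> 'p) \<Rightarrow> ('p \<Rightarrow> 'p) \<Rightarrow> ('p \<Rightarrow> 'p \<Rightarrow> 'p) \<Rightarrow> ('p \<Rightarrow> nat \<times> nat) \<Rightarrow> 'p \<Rightarrow> bool" where
  "isolated P r s c d l \<longleftrightarrow>
     (\<forall>n \<le> d l. \<forall>\<mu>\<in>P. r \<mu> = r l \<and> d \<mu> = n \<longrightarrow> \<mu> = seg P r s c d l 0 n) \<and>
     (\<forall>n \<le> d l. \<forall>\<mu>\<in>P. s \<mu> = s l \<and> d \<mu> = n \<longrightarrow> \<mu> = seg P r s c d l (d l - n) (d l))"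

definition iso_red_cycle ::
  "'p set \<Rightarrow> ('p \<Rightarrow> 'p) \<Rightarrow> ('p \<Rightarrow> 'p) \<Rightarrow> ('p \<Rightarrow> 'p \<Rightarrow> 'p) \<Rightarrow> ('p \<Rightarrow> nat \<times> nat) \<Rightarrow> 'p \<Rightarrow> bool" where
  "iso_red_cycle P r s c d l \<longleftrightarrow> is_cycle P r s c d l \<and> isolated P r s c d l \<and> fst (d l) = 0"

definition cyc_verts ::
  "'p set \<Rightarrow> ('p \<Rightarrow> 'p) \<Rightarrow> ('p \<Rightarrow> 'p) \<Rightarrow> ('p \<Rightarrow> 'p \<Rightarrow> 'p) \<Rightarrow> ('p \<Rightarrow> nat \<times> nat) \<Rightarrow> 'p \<Rightarrow> 'p set" where
  "cyc_verts P r s c d l = {pt P r s c d l n | n. n \<le> d l}"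

definition bratteli2 ::
  "'p set \<Rightarrow> ('p \<Rightarrow> 'p) \<Rightarrow> ('p \<Rightarrow> 'p) \<Rightarrow> ('p \<Rightarrow> 'p \<Rightarrow> 'p) \<Rightarrow> ('p \<Rightarrow> nat \<times> nat)
    \<Rightarrow> (nat \<Rightarrow> 'p set) \<Rightarrow> bool" where
  "bratteli2 P r s c d V \<longleftrightarrow>
     two_graph P r s c d \<and> row_finite P r d \<and>
     (\<forall>n. V n \<noteq> {} \<and> finite (V n)) \<and>
     (\<forall>m n. m \<noteq> n \<longrightarrow> V m \<inter> V n = {}) \<and>
     (\<Union>n. V n) = verts P d \<and>
     (\<forall>e\<in>P. d e = (1,0) \<longrightarrow> (\<exists>n. r e \<in> V n \<and> s e \<in> V (Suc n))) \<and>
     (\<forall>v\<in>verts P d. \<not> (\<exists>e\<in>P. d e = (1,0) \<and> s e = v) \<longrightarrow> v \<in> V 0) \<and>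
     (\<forall>v\<in>verts P d. \<exists>e\<in>P. d e = (1,0) \<and> r e = v) \<and>
     (\<forall>v\<in>verts P d. \<exists>l. iso_red_cycle P r s c d l \<and> v \<in> cyc_verts P r s c d l) \<and>
     (\<forall>f\<in>P. d f = (0,1) \<longrightarrow> (\<exists>n. r f \<in> V n \<and> s f \<in> V n))"

definition Fmap ::
  "'p set \<Rightarrow> ('p \<Rightarrow> 'p) \<Rightarrow> ('p \<Rightarrow> 'p) \<Rightarrow> ('p \<Rightarrow> 'p \<Rightarrow> 'p) \<Rightarrow> ('p \<Rightarrow> nat \<times> nat) \<Rightarrow> 'p \<Rightarrow> 'p" where
  "Fmap P r s c d \<alpha> =
     (let f = (THE f. f \<in> P \<and> d f = (0,1) \<and> s f = r \<alpha>) in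
      THE \<beta>. \<beta> \<in> P \<and> snd (d \<beta>) = 0 \<and>
        (\<exists>f'\<in>P. d f' = (0,1) \<and> s \<beta> = r f' \<and> c f \<alpha> = c \<beta> f'))"

definition ordF ::
  "'p set \<Rightarrow> ('p \<Rightarrow> 'p) \<Rightarrow> ('p \<Rightarrow> 'p) \<Rightarrow> ('p \<Rightarrow> 'p \<Rightarrow> 'p) \<Rightarrow> ('p \<Rightarrow> nat \<times> nat) \<Rightarrow> 'p \<Rightarrow> nat" where
  "ordF P r s c d \<alpha> = (LEAST k. 0 < k \<and> (Fmap P r s c d ^^ k) \<alpha> = \<alpha>)"

text \<open>Proper matrices (indices 1..rows, 1..cols), entries in nat = Z_+.\<close>
definition proper_mat :: "nat \<Rightarrow> nat \<Rightarrow> (nat \<Rightarrow> nat \<Rightarrow> nat) \<Rightarrow> bool" where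
  "proper_mat rows cols M \<longleftrightarrow>
     (\<forall>i\<in>{1..rows}. \<exists>j\<in>{1..cols}. M i j \<noteq> 0) \<and>
     (\<forall>j\<in>{1..cols}. \<exists>i\<in>{1..rows}. M i j \<noteq> 0)"

end

theory Submission imports Defs "HOL-Library.Countable" begin


lemma tg_fact:
  assumes "two_graph P r s c d" "l \<in> P" "d l = m + n"
   "p1 \<in> P" "p2 \<in> P" "q1 \<in> P" "q2 \<in> P" "s p1 = r p2" "s q1 = r q2"
   "d p1 = m" "d q1 = m" "d p2 = n" "d q2 = n" "c p1 p2 = l" "c q1 q2 = l"
  shows "p1 = q1 \<and> p2 = q2"
proof -
  from assms(1) have "\<exists>!q. fst q \<in> P \<and> snd q \<in> P \<and> s (fst q) = r (snd q) \<and>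
               d (fst q) = m \<and> d (snd q) = n \<and> c (fst q) (snd q) = l"
    using assms(2,3) unfolding two_graph_def by blast
  then have "(p1,p2) = (q1,q2)" using assms by (metis fst_conv snd_conv)
  then show ?thesis by simp
qed

lemma prod_add_diff: "(m::nat\<times>nat) \<le> n \<Longrightarrow> m + (n - m) = n"
  by (cases m; cases n) (auto simp: less_eq_prod_def)

lemma seg_eq:
  assumes tg: "two_graph P r s c d" and "l \<in> P" "a \<in> P" "\<mu> \<in> P" "b \<in> P"
    "d a = m" "d \<mu> = n - m" "d b = d l - n" "s a = r \<mu>" "s \<mu> = r b" "c (c a \<mu>) b = l"
    "m \<le> n" "n \<le> d l"
  shows "seg P r s c d l m n = \<mu>"
  unfolding seg_def
proof (rule the_equality)
  show "\<mu> \<in> P \<and> (\<exists>a\<in>P. \<exists>b\<in>P. d a = m \<and> d \<mu> = n - m \<and> d b = d l - n \<and> s a = r \<mu> \<and> s \<mu> = r b \<and> c (c a \<mu>) b = l)"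
    using assms by blast
next
  fix \<mu>2 assume "\<mu>2 \<in> P \<and> (\<exists>a\<in>P. \<exists>b\<in>P. d a = m \<and> d \<mu>2 = n - m \<and> d b = d l - n \<and> s a = r \<mu>2 \<and> s \<mu>2 = r b \<and> c (c a \<mu>2) b = l)"
  then obtain a2 b2 where h: "\<mu>2 \<in> P" "a2 \<in> P" "b2 \<in> P" "d a2 = m" "d \<mu>2 = n - m" "d b2 = d l - n"
    "s a2 = r \<mu>2" "s \<mu>2 = r b2" "c (c a2 \<mu>2) b2 = l" by blast
  have T: "\<forall>a\<in>P. \<forall>b\<in>P. s a = r b \<longrightarrow> c a b \<in> P \<and> r (c a b) = r a \<and> s (c a b) = s b"
     "\<forall>a\<in>P. \<forall>b\<in>P. s a = r b \<longrightarrow> d (c a b) = d a + d b"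
    using tg unfolding two_graph_def by blast+
  have x1: "c a \<mu> \<in> P" "s (c a \<mu>) = s \<mu>" "d (c a \<mu>) = n"
    using T assms prod_add_diff by auto
  have x2: "c a2 \<mu>2 \<in> P" "s (c a2 \<mu>2) = s \<mu>2" "d (c a2 \<mu>2) = n"
    using T h assms prod_add_diff by auto
  have "c a \<mu> = c a2 \<mu>2 \<and> b = b2"
    by (rule tg_fact[OF tg \<open>l \<in> P\<close>, of n "d l - n"])
       (use x1 x2 h assms prod_add_diff in auto)
  then have "a = a2 \<and> \<mu> = \<mu>2"
    by (intro tg_fact[OF tg x1(1), of m "n - m"]) (use x1 x2 h assms prod_add_diff in auto)
  then show "\<mu>2 = \<mu>" by simp
qed

lemma Fmap_eq:
  assumes tg: "two_graph P r s c d" and "fz \<in> P" "d fz = (0,1)" "s fz = r \<alpha>"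
    and uf: "\<And>f. f \<in> P \<Longrightarrow> d f = (0,1) \<Longrightarrow> s f = r \<alpha> \<Longrightarrow> f = fz"
    and "\<alpha> \<in> P" "d \<alpha> = (a,0)" "\<beta> \<in> P" "fr \<in> P" "d fr = (0,1)" "d \<beta> = (a,0)"
    "s \<beta> = r fr" "c fz \<alpha> = c \<beta> fr"
  shows "Fmap P r s c d \<alpha> = \<beta>"
proof -
  have "(THE f. f \<in> P \<and> d f = (0,1) \<and> s f = r \<alpha>) = fz"
    using assms(2,3,4) uf by (intro the_equality) blast+
  moreover have "(THE \<beta>. \<beta> \<in> P \<and> snd (d \<beta>) = 0 \<and>
        (\<exists>f'\<in>P. d f' = (0,1) \<and> s \<beta> = r f' \<and> c fz \<alpha> = c \<beta> f')) = \<beta>"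
  proof (rule the_equality)
    show "\<beta> \<in> P \<and> snd (d \<beta>) = 0 \<and> (\<exists>f'\<in>P. d f' = (0,1) \<and> s \<beta> = r f' \<and> c fz \<alpha> = c \<beta> f')"
      using assms(8-13) by auto
  next
    fix \<beta>2 assume "\<beta>2 \<in> P \<and> snd (d \<beta>2) = 0 \<and> (\<exists>f'\<in>P. d f' = (0,1) \<and> s \<beta>2 = r f' \<and> c fz \<alpha> = c \<beta>2 f')"
    then obtain f2 where h: "\<beta>2 \<in> P" "snd (d \<beta>2) = 0" "f2 \<in> P" "d f2 = (0,1)" "s \<beta>2 = r f2"
       "c fz \<alpha> = c \<beta>2 f2" by blast
    have T: "\<forall>a\<in>P. \<forall>b\<in>P. s a = r b \<longrightarrow> c a b \<in> P \<and> r (c a b) = r a \<and> s (c a b) = s b"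
     "\<forall>a\<in>P. \<forall>b\<in>P. s a = r b \<longrightarrow> d (c a b) = d a + d b"
      using tg unfolding two_graph_def by blast+
    have l: "c fz \<alpha> \<in> P" "d (c fz \<alpha>) = (a,1)" using T assms(2,3,4,6,7) by auto
    have "d (c \<beta>2 f2) = d \<beta>2 + (0,1)" using T h by auto
    with l h have "d \<beta>2 = (a,0)" by (cases "d \<beta>2") auto
    have "\<beta> = \<beta>2 \<and> fr = f2"
      by (rule tg_fact[OF tg l(1), of "(a,0)" "(0,1)"]) (use l h assms(8-13) \<open>d \<beta>2 = (a,0)\<close> in auto)
    then show "\<beta>2 = \<beta>" by simp
  qed
  ultimately show ?thesis unfolding Fmap_def Let_def by simp
qed



locale bd =
  fixes cn :: "nat \<Rightarrow> nat"
    and A B T :: "nat \<Rightarrow> nat \<Rightarrow> nat \<Rightarrow> nat"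
  assumes cpos: "\<forall>n. 0 < cn n"
    and Aprop: "\<forall>n. proper_mat (cn (Suc n)) (cn n) (A n)"
    and Bprop: "\<forall>n. proper_mat (cn (Suc n)) (cn n) (B n)"
    and Tprop: "\<forall>n. proper_mat (cn n) (cn n) (T n)"
    and Tdiag: "\<forall>n. \<forall>i\<in>{1..cn n}. \<forall>j\<in>{1..cn n}. i \<noteq> j \<longrightarrow> T n i j = 0"
    and ATTB: "\<forall>n. \<forall>i\<in>{1..cn (Suc n)}. \<forall>j\<in>{1..cn n}.
                 (\<Sum>k=1..cn n. A n i k * T n k j) = (\<Sum>k=1..cn (Suc n). T (Suc n) i k * B n k j)"
begin

definition tt :: "nat \<Rightarrow> nat \<Rightarrow> int" where "tt n j = int (T n j j)"
definition NN :: "nat \<Rightarrow> nat \<Rightarrow> nat \<Rightarrow> int" where "NN n i j = int (A n i j * T n j j)"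

fun vvalid :: "nat \<times> nat \<times> int \<Rightarrow> bool" where
  "vvalid (n,j,x) = (j \<in> {1..cn n} \<and> 0 \<le> x \<and> x < tt n j)"
fun evalid :: "nat \<times> nat \<times> nat \<times> int \<Rightarrow> bool" where
  "evalid (n,i,j,k) = (i \<in> {1..cn (Suc n)} \<and> j \<in> {1..cn n} \<and> 0 \<le> k \<and> k < NN n i j)"
fun erng :: "nat \<times> nat \<times> nat \<times> int \<Rightarrow> nat \<times> nat \<times> int" where
  "erng (n,i,j,k) = (n,j,k mod tt n j)"
fun esrc :: "nat \<times> nat \<times> nat \<times> int \<Rightarrow> nat \<times> nat \<times> int" where
  "esrc (n,i,j,k) = (Suc n,i,k mod tt (Suc n) i)"
fun shv :: "int \<Rightarrow> nat \<times> nat \<times> int \<Rightarrow> nat \<times> nat \<times> int" where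
  "shv b (n,j,x) = (n,j,(x+b) mod tt n j)"
fun she :: "int \<Rightarrow> nat \<times> nat \<times> nat \<times> int \<Rightarrow> nat \<times> nat \<times> nat \<times> int" where
  "she b (n,i,j,k) = (n,i,j,(k+b) mod NN n i j)"
fun chain :: "nat \<times> nat \<times> int \<Rightarrow> (nat \<times> nat \<times> nat \<times> int) list \<Rightarrow> bool" where
  "chain v [] = True"
| "chain v (e#es) = (erng e = v \<and> chain (esrc e) es)"
fun bsrc :: "nat \<times> nat \<times> int \<Rightarrow> (nat \<times> nat \<times> nat \<times> int) list \<Rightarrow> nat \<times> nat \<times> int" where
  "bsrc v [] = v"
| "bsrc v (e#es) = bsrc (esrc e) es"

definition Pm :: "((nat \<times> nat \<times> int) \<times> (nat \<times> nat \<times> nat \<times> int) list \<times> nat) set" where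
  "Pm = {(v,es,b). vvalid v \<and> (\<forall>e\<in>set es. evalid e) \<and> chain v es}"

fun rm :: "(nat \<times> nat \<times> int) \<times> (nat \<times> nat \<times> nat \<times> int) list \<times> nat \<Rightarrow> (nat \<times> nat \<times> int) \<times> (nat \<times> nat \<times> nat \<times> int) list \<times> nat" where
  "rm (v,es,b) = (v,[],0)"
fun sm :: "(nat \<times> nat \<times> int) \<times> (nat \<times> nat \<times> nat \<times> int) list \<times> nat \<Rightarrow> (nat \<times> nat \<times> int) \<times> (nat \<times> nat \<times> nat \<times> int) list \<times> nat" where
  "sm (v,es,b) = (shv (- int b) (bsrc v es),[],0)"
fun cm :: "(nat \<times> nat \<times> int) \<times> (nat \<times> nat \<times> nat \<times> int) list \<times> nat \<Rightarrow> (nat \<times> nat \<times> int) \<times> (nat \<times> nat \<times> nat \<times> int) list \<times> nat \<Rightarrow> (nat \<times> nat \<times> int) \<times> (nat \<times> nat \<times> nat \<times> int) list \<times> nat" where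
  "cm (v,es,b) (w,fs,b') = (v, es @ map (she (int b)) fs, b + b')"
fun dm :: "(nat \<times> nat \<times> int) \<times> (nat \<times> nat \<times> nat \<times> int) list \<times> nat \<Rightarrow> nat \<times> nat" where
  "dm (v,es,b) = (length es, b)"

lemma Pm_iff[simp]: "(v,es,b) \<in> Pm \<longleftrightarrow> vvalid v \<and> (\<forall>e\<in>set es. evalid e) \<and> chain v es"
  by (simp add: Pm_def)

lemma tpos: "j \<in> {1..cn n} \<Longrightarrow> 0 < T n j j"
proof -
  assume j: "j \<in> {1..cn n}"
  then obtain i where "i \<in> {1..cn n}" "T n i j \<noteq> 0" using Tprop unfolding proper_mat_def by blast
  then show ?thesis using Tdiag j by (cases "i = j") auto
qed

lemma ttpos: "j \<in> {1..cn n} \<Longrightarrow> 0 < tt n j"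
  using tpos by (simp add: tt_def)

lemma ABeq:
  assumes i: "i \<in> {1..cn (Suc n)}" and j: "j \<in> {1..cn n}"
  shows "A n i j * T n j j = T (Suc n) i i * B n i j"
proof -
  have "(\<Sum>k=1..cn n. A n i k * T n k j) = (\<Sum>k=1..cn n. if k = j then A n i j * T n j j else 0)"
    by (rule sum.cong) (use Tdiag j in auto)
  also have "\<dots> = A n i j * T n j j" using j by simp
  finally have L: "(\<Sum>k=1..cn n. A n i k * T n k j) = A n i j * T n j j" .
  have "(\<Sum>k=1..cn (Suc n). T (Suc n) i k * B n k j) = (\<Sum>k=1..cn (Suc n). if k = i then T (Suc n) i i * B n i j else 0)"
    by (rule sum.cong) (use Tdiag i in auto)
  also have "\<dots> = T (Suc n) i i * B n i j" using i by simp
  finally show ?thesis using L ATTB i j by metis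
qed

lemma NN_B: "i \<in> {1..cn (Suc n)} \<Longrightarrow> j \<in> {1..cn n} \<Longrightarrow> NN n i j = int (B n i j) * tt (Suc n) i"
  using ABeq by (simp add: NN_def tt_def mult.commute)

lemma dvd_rng: "tt n j dvd NN n i j" by (simp add: NN_def tt_def)
lemma dvd_src: "i \<in> {1..cn (Suc n)} \<Longrightarrow> j \<in> {1..cn n} \<Longrightarrow> tt (Suc n) i dvd NN n i j"
  using NN_B by simp

lemma shv_add: "shv a (shv b v) = shv (b + a) v"
  by (cases v rule: prod_cases3) (simp add: mod_add_left_eq add.assoc)
lemma she_add: "she a (she b e) = she (b + a) e"
  by (cases e rule: prod_cases4) (simp add: mod_add_left_eq add.assoc)
lemma shv_0: "vvalid v \<Longrightarrow> shv 0 v = v"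
  by (cases v rule: prod_cases3) simp
lemma she_0: "evalid e \<Longrightarrow> she 0 e = e"
  by (cases e rule: prod_cases4) simp
lemma shv_valid: "vvalid v \<Longrightarrow> vvalid (shv b v)"
  by (cases v rule: prod_cases3) simp
lemma she_valid: "evalid e \<Longrightarrow> evalid (she b e)"
  by (cases e rule: prod_cases4) simp
lemma erng_valid: "evalid e \<Longrightarrow> vvalid (erng e)"
  by (cases e rule: prod_cases4) (use ttpos in auto)
lemma esrc_valid: "evalid e \<Longrightarrow> vvalid (esrc e)"
  by (cases e rule: prod_cases4) (use ttpos in auto)
lemma erng_she: "erng (she b e) = shv b (erng e)"
  by (cases e rule: prod_cases4) (simp add: mod_mod_cancel[OF dvd_rng] mod_add_left_eq)
lemma esrc_she: "evalid e \<Longrightarrow> esrc (she b e) = shv b (esrc e)"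
  by (cases e rule: prod_cases4) (simp add: mod_mod_cancel[OF dvd_src] mod_add_left_eq)

lemma shv_inv: "vvalid v \<Longrightarrow> shv (- b) (shv b v) = v"
  by (simp add: shv_add shv_0)
lemma shv_inv2: "vvalid v \<Longrightarrow> shv b (shv (- b) v) = v"
  by (simp add: shv_add shv_0)

lemma chain_append: "chain v (xs @ ys) = (chain v xs \<and> chain (bsrc v xs) ys)"
  by (induction xs arbitrary: v) auto
lemma bsrc_append: "bsrc v (xs @ ys) = bsrc (bsrc v xs) ys"
  by (induction xs arbitrary: v) auto
lemma chain_shift: "\<forall>e\<in>set es. evalid e \<Longrightarrow> chain v es \<Longrightarrow> chain (shv b v) (map (she b) es)"
  by (induction es arbitrary: v) (auto simp: erng_she esrc_she)
lemma bsrc_shift: "\<forall>e\<in>set es. evalid e \<Longrightarrow> bsrc (shv b v) (map (she b) es) = shv b (bsrc v es)"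
  by (induction es arbitrary: v) (auto simp: esrc_she)
lemma bsrc_valid: "vvalid v \<Longrightarrow> \<forall>e\<in>set es. evalid e \<Longrightarrow> vvalid (bsrc v es)"
  by (induction es arbitrary: v) (auto simp: esrc_valid)
lemma map_she_0: "\<forall>e\<in>set es. evalid e \<Longrightarrow> map (she 0) es = es"
  by (induction es) (auto simp: she_0)
lemma map_she_add: "map (she a) (map (she b) es) = map (she (b + a)) es"
  by (induction es) (auto simp: she_add)

end

context bd begin

lemma she_comp: "she a \<circ> she b = she (b + a)"
  by (rule ext) (simp add: she_add)

lemma comp_ok:
  assumes "p \<in> Pm" "q \<in> Pm" "sm p = rm q"
  shows "cm p q \<in> Pm \<and> rm (cm p q) = rm p \<and> sm (cm p q) = sm q"
proof -
  obtain v es b where p: "p = (v,es,b)" by (cases p rule: prod_cases3)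
  obtain w fs b' where q: "q = (w,fs,b')" by (cases q rule: prod_cases3)
  have h: "vvalid v" "\<forall>e\<in>set es. evalid e" "chain v es" "vvalid w" "\<forall>e\<in>set fs. evalid e" "chain w fs"
    "shv (- int b) (bsrc v es) = w" using assms by (auto simp: p q)
  have bv: "vvalid (bsrc v es)" using bsrc_valid h by blast
  have w2: "shv (int b) w = bsrc v es" using h(7) shv_inv2[OF bv] by blast
  have ch: "chain v (es @ map (she (int b)) fs)"
    using h chain_shift[OF h(5,6), of "int b"] w2 by (simp add: chain_append)
  have va: "\<forall>e\<in>set (es @ map (she (int b)) fs). evalid e" using h she_valid by auto
  have "sm (cm p q) = (shv (- int (b + b')) (bsrc (shv (int b) w) (map (she (int b)) fs)), [], 0)"
    by (simp add: p q bsrc_append w2)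
  also have "\<dots> = (shv (- int (b + b')) (shv (int b) (bsrc w fs)), [], 0)"
    using bsrc_shift h by simp
  also have "\<dots> = sm q" by (simp add: q shv_add)
  finally show ?thesis using ch va h by (simp add: p q)
qed

lemma assoc_ok: "cm (cm p q) e = cm p (cm q e)"
  by (cases p rule: prod_cases3; cases q rule: prod_cases3; cases e rule: prod_cases3)
     (simp add: she_comp add.commute)

lemma fact_ok:
  assumes "l \<in> Pm" "dm l = m + n"
  shows "\<exists>!q. fst q \<in> Pm \<and> snd q \<in> Pm \<and> sm (fst q) = rm (snd q) \<and>
               dm (fst q) = m \<and> dm (snd q) = n \<and> cm (fst q) (snd q) = l"
proof -
  obtain v es b where l: "l = (v,es,b)" by (cases l rule: prod_cases3)
  obtain a1 b1 where m: "m = (a1,b1)" by (cases m)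
  obtain a2 b2 where n: "n = (a2,b2)" by (cases n)
  have h: "vvalid v" "\<forall>e\<in>set es. evalid e" "chain v es" "length es = a1 + a2" "b = b1 + b2"
    using assms by (auto simp: l m n)
  define q0 where "q0 = ((v, take a1 es, b1),
      (shv (- int b1) (bsrc v (take a1 es)), map (she (- int b1)) (drop a1 es), b2))"
  let ?Q = "\<lambda>q. fst q \<in> Pm \<and> snd q \<in> Pm \<and> sm (fst q) = rm (snd q) \<and>
               dm (fst q) = m \<and> dm (snd q) = n \<and> cm (fst q) (snd q) = l"
  have ct: "chain v (take a1 es)" "chain (bsrc v (take a1 es)) (drop a1 es)"
    using h(3) chain_append[of v "take a1 es" "drop a1 es"] by auto
  have vt: "\<forall>e\<in>set (take a1 es). evalid e" "\<forall>e\<in>set (drop a1 es). evalid e"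
    using h(2) by (auto dest: in_set_takeD in_set_dropD)
  have bv: "vvalid (bsrc v (take a1 es))" using bsrc_valid h(1) vt(1) by blast
  have "?Q q0"
  proof -
    have "chain (shv (- int b1) (bsrc v (take a1 es))) (map (she (- int b1)) (drop a1 es))"
      using chain_shift[OF vt(2) ct(2)] .
    moreover have "map (she (int b1)) (map (she (- int b1)) (drop a1 es)) = drop a1 es"
      using map_she_0[OF vt(2)] by (simp add: she_comp)
    ultimately show ?thesis
      using h ct vt bv shv_valid she_valid by (auto simp: q0_def l m n)
  qed
  moreover have "q = q0" if Q: "?Q q" for q
  proof -
    obtain p1 p2 where "q = (p1,p2)" by (cases q)
    moreover obtain v1 es1 c1 where "p1 = (v1,es1,c1)" by (cases p1 rule: prod_cases3)
    moreover obtain w2 fs2 c2 where "p2 = (w2,fs2,c2)" by (cases p2 rule: prod_cases3)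
    ultimately have q: "q = ((v1,es1,c1),(w2,fs2,c2))" by simp
    have g: "vvalid w2" "\<forall>e\<in>set fs2. evalid e" "length es1 = a1" "c1 = b1" "v1 = v"
      "es1 @ map (she (int b1)) fs2 = es" "c2 = b2" "w2 = shv (- int b1) (bsrc v1 es1)"
      using Q by (auto simp: q m n l)
    have e1: "es1 = take a1 es" using g(3,6) by (metis append_eq_conv_conj)
    have "map (she (int b1)) fs2 = drop a1 es" using g(3,6) by (metis append_eq_conv_conj)
    then have "map (she (- int b1)) (map (she (int b1)) fs2) = map (she (- int b1)) (drop a1 es)" by simp
    then have "fs2 = map (she (- int b1)) (drop a1 es)"
      using map_she_0[OF g(2)] by (simp add: she_comp)
    then show ?thesis using g e1 by (simp add: q q0_def)
  qed
  ultimately show ?thesis by blast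
qed

lemma tg_model: "two_graph Pm rm sm cm dm"
  unfolding two_graph_def
proof (intro conjI)
  show "countable Pm" by (rule countableI_type)
  show "\<forall>a\<in>Pm. rm a \<in> Pm \<and> sm a \<in> Pm \<and> rm (rm a) = rm a \<and> sm (rm a) = rm a \<and> rm (sm a) = sm a \<and> sm (sm a) = sm a"
  proof
    fix a assume "a \<in> Pm"
    then obtain v es b where a: "a = (v,es,b)" "vvalid v" "\<forall>e\<in>set es. evalid e" "chain v es"
      by (cases a rule: prod_cases3) auto
    then have "vvalid (bsrc v es)" using bsrc_valid by blast
    then show "rm a \<in> Pm \<and> sm a \<in> Pm \<and> rm (rm a) = rm a \<and> sm (rm a) = rm a \<and> rm (sm a) = sm a \<and> sm (sm a) = sm a"
      using a by (simp add: shv_valid shv_0)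
  qed
  show "\<forall>a\<in>Pm. cm (rm a) a = a \<and> cm a (sm a) = a"
  proof
    fix a assume "a \<in> Pm"
    then obtain v es b where a: "a = (v,es,b)" "vvalid v" "\<forall>e\<in>set es. evalid e" "chain v es"
      by (cases a rule: prod_cases3) auto
    then show "cm (rm a) a = a \<and> cm a (sm a) = a" by (simp add: map_she_0)
  qed
  show "\<forall>a\<in>Pm. \<forall>b\<in>Pm. sm a = rm b \<longrightarrow> cm a b \<in> Pm \<and> rm (cm a b) = rm a \<and> sm (cm a b) = sm b"
    using comp_ok by blast
  show "\<forall>a\<in>Pm. \<forall>b\<in>Pm. \<forall>e\<in>Pm. sm a = rm b \<and> sm b = rm e \<longrightarrow> cm (cm a b) e = cm a (cm b e)"
    using assoc_ok by blast
  show "\<forall>a\<in>Pm. dm (rm a) = 0"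
    by (auto simp: zero_prod_def)
  show "\<forall>a\<in>Pm. \<forall>b\<in>Pm. sm a = rm b \<longrightarrow> dm (cm a b) = dm a + dm b"
    by (intro ballI; case_tac a rule: prod_cases3; case_tac b rule: prod_cases3) auto
  show "\<forall>l\<in>Pm. \<forall>m n. dm l = m + n \<longrightarrow> (\<exists>!q. fst q \<in> Pm \<and> snd q \<in> Pm \<and> sm (fst q) = rm (snd q) \<and>
               dm (fst q) = m \<and> dm (snd q) = n \<and> cm (fst q) (snd q) = l)"
    using fact_ok by blast
qed

end


lemma tg_transport:
  assumes tg: "two_graph P r s c d" and gh: "\<And>x. g (h x) = x"
  shows "two_graph (h`P) (\<lambda>x. h (r (g x))) (\<lambda>x. h (s (g x))) (\<lambda>x y. h (c (g x) (g y))) (\<lambda>x. d (g x))"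
proof -
  have hinj: "h a = h b \<longleftrightarrow> a = b" for a b by (metis gh)
  have T: "countable P"
    "\<forall>a\<in>P. r a \<in> P \<and> s a \<in> P \<and> r (r a) = r a \<and> s (r a) = r a \<and> r (s a) = s a \<and> s (s a) = s a"
    "\<forall>a\<in>P. c (r a) a = a \<and> c a (s a) = a"
    "\<forall>a\<in>P. \<forall>b\<in>P. s a = r b \<longrightarrow> c a b \<in> P \<and> r (c a b) = r a \<and> s (c a b) = s b"
    "\<forall>a\<in>P. \<forall>b\<in>P. \<forall>e\<in>P. s a = r b \<and> s b = r e \<longrightarrow> c (c a b) e = c a (c b e)"
    "\<forall>a\<in>P. d (r a) = 0"
    "\<forall>a\<in>P. \<forall>b\<in>P. s a = r b \<longrightarrow> d (c a b) = d a + d b"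
    "\<forall>l\<in>P. \<forall>m n. d l = m + n \<longrightarrow>
        (\<exists>!q. fst q \<in> P \<and> snd q \<in> P \<and> s (fst q) = r (snd q) \<and>
               d (fst q) = m \<and> d (snd q) = n \<and> c (fst q) (snd q) = l)"
    using tg unfolding two_graph_def by blast+
  show ?thesis
    unfolding two_graph_def
  proof (intro conjI)
    show "countable (h ` P)" using T(1) by simp
    show "\<forall>a\<in>h ` P. h (r (g a)) \<in> h ` P \<and> h (s (g a)) \<in> h ` P \<and> h (r (g (h (r (g a))))) = h (r (g a)) \<and>
        h (s (g (h (r (g a))))) = h (r (g a)) \<and> h (r (g (h (s (g a))))) = h (s (g a)) \<and> h (s (g (h (s (g a))))) = h (s (g a))"
      using T(2) by (auto simp: gh)
    show "\<forall>a\<in>h ` P. h (c (g (h (r (g a)))) (g a)) = a \<and> h (c (g a) (g (h (s (g a))))) = a"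
      using T(3) by (auto simp: gh)
    show "\<forall>a\<in>h ` P. \<forall>b\<in>h ` P. h (s (g a)) = h (r (g b)) \<longrightarrow>
      h (c (g a) (g b)) \<in> h ` P \<and> h (r (g (h (c (g a) (g b))))) = h (r (g a)) \<and> h (s (g (h (c (g a) (g b))))) = h (s (g b))"
      using T(4) by (auto simp: gh hinj)
    show "\<forall>a\<in>h ` P. \<forall>b\<in>h ` P. \<forall>e\<in>h ` P. h (s (g a)) = h (r (g b)) \<and> h (s (g b)) = h (r (g e)) \<longrightarrow>
       h (c (g (h (c (g a) (g b)))) (g e)) = h (c (g a) (g (h (c (g b) (g e)))))"
      using T(5) by (auto simp: gh hinj)
    show "\<forall>a\<in>h ` P. d (g (h (r (g a)))) = 0" using T(6) by (auto simp: gh)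
    show "\<forall>a\<in>h ` P. \<forall>b\<in>h ` P. h (s (g a)) = h (r (g b)) \<longrightarrow> d (g (h (c (g a) (g b)))) = d (g a) + d (g b)"
      using T(7) by (auto simp: gh hinj)
    show "\<forall>l\<in>h ` P. \<forall>m n. d (g l) = m + n \<longrightarrow>
      (\<exists>!q. fst q \<in> h ` P \<and> snd q \<in> h ` P \<and> h (s (g (fst q))) = h (r (g (snd q))) \<and>
        d (g (fst q)) = m \<and> d (g (snd q)) = n \<and> h (c (g (fst q)) (g (snd q))) = l)"
    proof (intro ballI allI impI)
      fix l' m n assume l': "l' \<in> h ` P" and dl: "d (g l') = m + n"
      then obtain l where l: "l \<in> P" "l' = h l" by blast
      then have "d l = m + n" using dl by (simp add: gh)
      then obtain q where q: "fst q \<in> P \<and> snd q \<in> P \<and> s (fst q) = r (snd q) \<and>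
               d (fst q) = m \<and> d (snd q) = n \<and> c (fst q) (snd q) = l"
        and qu: "\<And>q'. fst q' \<in> P \<and> snd q' \<in> P \<and> s (fst q') = r (snd q') \<and>
               d (fst q') = m \<and> d (snd q') = n \<and> c (fst q') (snd q') = l \<Longrightarrow> q' = q"
        using T(8) l(1) by metis
      show "\<exists>!q. fst q \<in> h ` P \<and> snd q \<in> h ` P \<and> h (s (g (fst q))) = h (r (g (snd q))) \<and>
        d (g (fst q)) = m \<and> d (g (snd q)) = n \<and> h (c (g (fst q)) (g (snd q))) = l'"
      proof (rule ex1I[of _ "(h (fst q), h (snd q))"])
        show "fst (h (fst q), h (snd q)) \<in> h ` P \<and> snd (h (fst q), h (snd q)) \<in> h ` P \<and>
          h (s (g (fst (h (fst q), h (snd q))))) = h (r (g (snd (h (fst q), h (snd q))))) \<and>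
          d (g (fst (h (fst q), h (snd q)))) = m \<and> d (g (snd (h (fst q), h (snd q)))) = n \<and>
          h (c (g (fst (h (fst q), h (snd q)))) (g (snd (h (fst q), h (snd q))))) = l'"
          using q l by (simp add: gh)
      next
        fix q2 assume q2: "fst q2 \<in> h ` P \<and> snd q2 \<in> h ` P \<and> h (s (g (fst q2))) = h (r (g (snd q2))) \<and>
          d (g (fst q2)) = m \<and> d (g (snd q2)) = n \<and> h (c (g (fst q2)) (g (snd q2))) = l'"
        then obtain p1 p2 where p: "p1 \<in> P" "p2 \<in> P" "fst q2 = h p1" "snd q2 = h p2" by blast
        have "(p1,p2) = q" using q2 p l by (intro qu) (simp add: gh hinj)
        then show "q2 = (h (fst q), h (snd q))" using p by (metis prod.collapse fst_conv snd_conv)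
      qed
    qed
  qed
qed

lemma rf_transport:
  assumes rf: "row_finite P r d" and gh: "\<And>x. g (h x) = x"
  shows "row_finite (h`P) (\<lambda>x. h (r (g x))) (\<lambda>x. d (g x))"
  unfolding row_finite_def
proof (intro ballI allI)
  fix v' n assume "v' \<in> verts (h ` P) (\<lambda>x. d (g x))"
  then obtain v where v: "v \<in> verts P d" "v' = h v" by (auto simp: verts_def gh)
  have "{a \<in> h ` P. h (r (g a)) = v' \<and> d (g a) = n} \<subseteq> h ` {a\<in>P. r a = v \<and> d a = n}"
  proof
    fix x assume "x \<in> {a \<in> h ` P. h (r (g a)) = v' \<and> d (g a) = n}"
    then obtain a where a: "a \<in> P" "x = h a" "h (r a) = v'" "d a = n" by (auto simp: gh)
    then have "r a = v" using v by (metis gh)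
    then show "x \<in> h ` {a\<in>P. r a = v \<and> d a = n}" using a by blast
  qed
  moreover have "finite {a\<in>P. r a = v \<and> d a = n}" using rf v unfolding row_finite_def by blast
  ultimately show "finite {a \<in> h ` P. h (r (g a)) = v' \<and> d (g a) = n}"
    by (meson finite_imageI finite_subset)
qed

context bd begin

lemma chain_level: "chain w es \<Longrightarrow> \<forall>e\<in>set es. fst e < fst w + length es"
proof (induction es arbitrary: w)
  case Nil then show ?case by simp
next
  case (Cons e es)
  obtain n i j k where e: "e = (n,i,j,k)" by (cases e rule: prod_cases4)
  have "fst w = n" "fst (esrc e) = Suc n" using Cons.prems by (auto simp: e)
  then show ?case using Cons.IH[of "esrc e"] Cons.prems by (auto simp: e)
qed

lemma finite_edges: "finite {e. evalid e \<and> fst e < L}"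
proof -
  have "{e. evalid e \<and> fst e < L} \<subseteq> (\<Union>n<L. \<Union>i\<in>{1..cn (Suc n)}. \<Union>j\<in>{1..cn n}. (\<lambda>k. (n,i,j,k)) ` {0..<NN n i j})"
  proof
    fix e assume "e \<in> {e. evalid e \<and> fst e < L}"
    then show "e \<in> (\<Union>n<L. \<Union>i\<in>{1..cn (Suc n)}. \<Union>j\<in>{1..cn n}. (\<lambda>k. (n,i,j,k)) ` {0..<NN n i j})"
    proof -
      obtain n i j k where e: "e = (n,i,j,k)" by (cases e rule: prod_cases4)
      have h: "n < L" "i \<in> {1..cn (Suc n)}" "j \<in> {1..cn n}" "k \<in> {0..<NN n i j}"
        using \<open>e \<in> {e. evalid e \<and> fst e < L}\<close> by (auto simp: e)
      have "e \<in> (\<lambda>k. (n,i,j,k)) ` {0..<NN n i j}" using h(4) e by blast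
      then show ?thesis using h(1-3) by blast
    qed
  qed
  moreover have "finite (\<Union>n<L. \<Union>i\<in>{1..cn (Suc n)}. \<Union>j\<in>{1..cn n}. (\<lambda>k. (n,i,j,k)) ` {0..<NN n i j})"
    by auto
  ultimately show ?thesis by (rule finite_subset)
qed

lemma rf_model: "row_finite Pm rm dm"
  unfolding row_finite_def
proof (intro ballI allI)
  fix v and n :: "nat \<times> nat" assume "v \<in> verts Pm dm"
  then obtain w where v: "v = (w,[],0)" "vvalid w"
    by (cases v rule: prod_cases3) (auto simp: verts_def zero_prod_def)
  let ?E = "{e. evalid e \<and> fst e < fst w + fst n}"
  have "{a \<in> Pm. rm a = v \<and> dm a = n} \<subseteq> (\<lambda>es. (w, es, snd n)) ` {es. set es \<subseteq> ?E \<and> length es = fst n}"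
  proof
    fix a assume a: "a \<in> {a \<in> Pm. rm a = v \<and> dm a = n}"
    obtain w' es b where a': "a = (w',es,b)" by (cases a rule: prod_cases3)
    have "w' = w" "b = snd n" "length es = fst n" "chain w es" "\<forall>e\<in>set es. evalid e"
      using a v by (auto simp: a')
    then show "a \<in> (\<lambda>es. (w, es, snd n)) ` {es. set es \<subseteq> ?E \<and> length es = fst n}"
      using chain_level[of w es] by (auto simp: a')
  qed
  moreover have "finite {es. set es \<subseteq> ?E \<and> length es = fst n}"
    by (rule finite_lists_length_eq) (rule finite_edges)
  ultimately show "finite {a \<in> Pm. rm a = v \<and> dm a = n}"
    by (meson finite_imageI finite_subset)
qed

definition PN :: "nat set" where "PN = to_nat ` Pm"
definition rN :: "nat \<Rightarrow> nat" where "rN x = to_nat (rm (from_nat x))"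
definition sN :: "nat \<Rightarrow> nat" where "sN x = to_nat (sm (from_nat x))"
definition cN :: "nat \<Rightarrow> nat \<Rightarrow> nat" where "cN x y = to_nat (cm (from_nat x) (from_nat y))"
definition dN :: "nat \<Rightarrow> nat \<times> nat" where "dN x = dm (from_nat x)"

lemma tgN: "two_graph PN rN sN cN dN"
  using tg_transport[OF tg_model, of from_nat to_nat]
  unfolding PN_def rN_def[abs_def] sN_def[abs_def] cN_def[abs_def] dN_def[abs_def] by simp

lemma rfN: "row_finite PN rN dN"
  using rf_transport[OF rf_model, of from_nat to_nat]
  unfolding PN_def rN_def[abs_def] dN_def[abs_def] by simp

lemma N_simps[simp]:
  "rN (to_nat p) = to_nat (rm p)" "sN (to_nat p) = to_nat (sm p)"
  "cN (to_nat p) (to_nat q) = to_nat (cm p q)" "dN (to_nat p) = dm p"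
  "to_nat p \<in> PN \<longleftrightarrow> p \<in> Pm"
  by (auto simp: rN_def sN_def cN_def dN_def PN_def)

end

type_synonym edg = "nat \<times> nat \<times> nat \<times> int"
type_synonym pth = "(nat \<times> nat \<times> int) \<times> edg list \<times> nat"
abbreviation vp :: "nat \<times> nat \<times> int \<Rightarrow> nat \<Rightarrow> pth" where "vp w b \<equiv> (w, [], b)"

context bd begin

definition WN :: "nat \<Rightarrow> nat \<Rightarrow> nat set" where
  "WN n j = to_nat ` ((\<lambda>x. vp (n,j,x) 0) ` {0..<tt n j})"
definition VN :: "nat \<Rightarrow> nat set" where
  "VN n = (\<Union>j\<in>{1..cn n}. WN n j)"
definition cyc :: "nat \<Rightarrow> nat \<Rightarrow> nat" where
  "cyc n j = to_nat (vp (n,j,0) (T n j j))"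
definition blueE :: "nat \<times> nat \<times> nat \<times> int \<Rightarrow> nat" where
  "blueE ed = to_nat (erng ed, [ed], 0::nat)"

lemma WN_mem: "to_nat p \<in> WN n j \<longleftrightarrow> (\<exists>x. 0 \<le> x \<and> x < tt n j \<and> p = vp (n,j,x) 0)"
  by (auto simp: WN_def)

lemma WN_elem: "y \<in> WN n j \<Longrightarrow> \<exists>x. 0 \<le> x \<and> x < tt n j \<and> y = to_nat (vp (n,j,x) 0)"
  by (auto simp: WN_def)

lemma card_WN: "card (WN n j) = T n j j"
proof -
  have "card (WN n j) = card ((\<lambda>x. vp (n,j,x) 0) ` {0..<tt n j})"
    unfolding WN_def by (rule card_image) (simp add: inj_on_def)
  also have "\<dots> = card {0..<tt n j}" by (rule card_image) (simp add: inj_on_def)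
  finally show ?thesis by (simp add: tt_def)
qed

lemma blueE_simps:
  "rN (blueE ed) = to_nat (vp (erng ed) 0)"
  "dN (blueE ed) = (1,0)"
  "evalid ed \<Longrightarrow> sN (blueE ed) = to_nat (vp (esrc ed) 0)"
  "evalid ed \<Longrightarrow> blueE ed \<in> PN"
  by (auto simp: blueE_def shv_0 esrc_valid erng_valid)

lemma blueE_inj: "blueE a = blueE b \<longleftrightarrow> a = b"
  by (auto simp: blueE_def)

lemma blue_char:
  assumes "e \<in> PN" "dN e = (1,0)"
  shows "\<exists>ed. evalid ed \<and> e = blueE ed"
proof -
  obtain p where p: "p \<in> Pm" "e = to_nat p" using assms(1) by (auto simp: PN_def)
  obtain v es b where pp: "p = (v,es,b)" by (cases p rule: prod_cases3)
  have "length es = 1" "b = 0" using assms(2) p by (auto simp: pp)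
  then obtain ed where "es = [ed]" by (metis One_nat_def length_0_conv length_Suc_conv)
  moreover have "evalid ed" "erng ed = v" using p(1) \<open>es = [ed]\<close> by (auto simp: pp)
  ultimately show ?thesis using p \<open>b = 0\<close> by (intro exI[of _ ed]) (auto simp: pp blueE_def)
qed

lemma red_char:
  assumes "f \<in> PN" "dN f = (0,1)"
  shows "\<exists>w. vvalid w \<and> f = to_nat (vp w 1)"
proof -
  obtain p where p: "p \<in> Pm" "f = to_nat p" using assms(1) by (auto simp: PN_def)
  obtain v es b where pp: "p = (v,es,b)" by (cases p rule: prod_cases3)
  have "vvalid v" "es = []" "b = 1" using assms(2) p by (auto simp: pp)
  then show ?thesis using p by (intro exI[of _ v]) (auto simp: pp)
qed

lemma vert_char:
  assumes "x \<in> PN" "dN x = 0"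
  shows "\<exists>w. vvalid w \<and> x = to_nat (vp w 0)"
proof -
  obtain p where p: "p \<in> Pm" "x = to_nat p" using assms(1) by (auto simp: PN_def)
  obtain v es b where pp: "p = (v,es,b)" by (cases p rule: prod_cases3)
  have "vvalid v" "es = []" "b = 0" using assms(2) p by (auto simp: pp zero_prod_def)
  then show ?thesis using p by (intro exI[of _ v]) (auto simp: pp)
qed

lemma verts_N: "verts PN dN = (\<Union>n. VN n)"
proof
  show "verts PN dN \<subseteq> (\<Union>n. VN n)"
  proof
    fix x assume "x \<in> verts PN dN"
    then have "x \<in> PN" "dN x = 0" by (auto simp: verts_def)
    then obtain w where w: "vvalid w" "x = to_nat (vp w 0)" using vert_char by blast
    obtain n j y where "w = (n,j,y)" by (cases w rule: prod_cases3)
    then show "x \<in> (\<Union>n. VN n)" using w by (auto simp: VN_def WN_mem)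
  qed
  show "(\<Union>n. VN n) \<subseteq> verts PN dN"
    by (auto simp: VN_def WN_def verts_def zero_prod_def)
qed

lemma VN_ne: "VN n \<noteq> {}"
proof -
  have "1 \<in> {1..cn n}" using cpos by (simp add: Suc_leI)
  moreover have "to_nat (vp (n,1,0) 0) \<in> WN n 1"
    using ttpos[OF \<open>1 \<in> {1..cn n}\<close>] by (auto simp: WN_mem)
  ultimately show ?thesis by (auto simp: VN_def)
qed

lemma VN_fin: "finite (VN n)"
  by (auto simp: VN_def WN_def)

lemma VN_disj: "m \<noteq> n \<Longrightarrow> VN m \<inter> VN n = {}"
  by (auto simp: VN_def WN_def)

lemma WN_disj: "i \<noteq> j \<Longrightarrow> WN n i \<inter> WN n j = {}"
  by (auto simp: WN_def)

end

context bd begin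

lemma tg_facts: "two_graph PN rN sN cN dN" by (rule tgN)

lemma shv_v0: "shv b (n,j,0) = (n,j,b mod tt n j)" by simp

lemma pt_cyc:
  assumes j: "j \<in> {1..cn n}" and m: "m \<le> T n j j"
  shows "pt PN rN sN cN dN (cyc n j) (0,m) = to_nat (vp (shv (- int m) (n,j,0)) 0)"
  unfolding pt_def
proof (rule seg_eq[OF tgN, where a = "to_nat (vp (n,j,0) m)" and b = "to_nat (vp (shv (- int m) (n,j,0)) (T n j j - m))"])
  have v0: "vvalid (n,j,0)" using ttpos[OF j] j by simp
  have v1: "vvalid (shv (- int m) (n,j,0))" using shv_valid[OF v0] .
  show "cyc n j \<in> PN" "to_nat (vp (n,j,0) m) \<in> PN" "to_nat (vp (shv (- int m) (n,j,0)) 0) \<in> PN"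
    "to_nat (vp (shv (- int m) (n,j,0)) (T n j j - m)) \<in> PN"
    using v0 v1 by (auto simp: cyc_def simp del: shv.simps)
  show "dN (to_nat (vp (n,j,0) m)) = (0,m)" by simp
  show "dN (to_nat (vp (shv (- int m) (n,j,0)) 0)) = (0,m) - (0,m)" by (simp add: zero_prod_def)
  show "dN (to_nat (vp (shv (- int m) (n,j,0)) (T n j j - m))) = dN (cyc n j) - (0,m)"
    by (simp add: cyc_def)
  show "sN (to_nat (vp (n,j,0) m)) = rN (to_nat (vp (shv (- int m) (n,j,0)) 0))" by simp
  show "sN (to_nat (vp (shv (- int m) (n,j,0)) 0)) = rN (to_nat (vp (shv (- int m) (n,j,0)) (T n j j - m)))"
    using shv_0[OF v1] by (simp del: shv.simps)
  show "cN (cN (to_nat (vp (n,j,0) m)) (to_nat (vp (shv (- int m) (n,j,0)) 0))) (to_nat (vp (shv (- int m) (n,j,0)) (T n j j - m))) = cyc n j"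
    using m by (simp add: cyc_def del: shv.simps)
  show "(0::nat,m) \<le> (0,m)" by simp
  show "(0,m) \<le> dN (cyc n j)" using m by (simp add: cyc_def less_eq_prod_def)
qed

lemma neg_mod: "0 < (q::int) \<Longrightarrow> q < t \<Longrightarrow> (- q) mod t = t - q"
  by (simp add: zmod_zminus1_eq_if)

lemma iso_cyc:
  assumes j: "j \<in> {1..cn n}"
  shows "iso_red_cycle PN rN sN cN dN (cyc n j)"
proof -
  let ?t = "T n j j"
  let ?l = "cyc n j"
  have tp: "0 < ?t" using tpos[OF j] .
  have v0: "vvalid (n,j,0)" using ttpos[OF j] j by simp
  have ttt: "tt n j = int ?t" by (simp add: tt_def)
  have dl: "dN ?l = (0, ?t)" by (simp add: cyc_def)
  have sl: "sN ?l = to_nat (vp (n,j,0) 0)" by (simp add: cyc_def ttt)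
  have rl: "rN ?l = to_nat (vp (n,j,0) 0)" by (simp add: cyc_def)
  have lP: "?l \<in> PN" using v0 by (simp add: cyc_def del: vvalid.simps)
  have cyc: "is_cycle PN rN sN cN dN ?l"
    unfolding is_cycle_def
  proof (intro conjI allI impI)
    show "?l \<in> PN" by (rule lP)
    show "dN ?l \<noteq> 0" using dl tp by (simp add: zero_prod_def)
    show "rN ?l = sN ?l" using sl rl by simp
    fix nn :: "nat \<times> nat" assume nn: "0 < nn \<and> nn < dN ?l"
    obtain p q where pq: "nn = (p,q)" by (cases nn)
    have "p = 0" "0 < q" "q < ?t" using nn dl
      by (auto simp: pq less_prod_def less_eq_prod_def zero_prod_def)
    then have "pt PN rN sN cN dN ?l nn = to_nat (vp (shv (- int q) (n,j,0)) 0)"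
      using pt_cyc[OF j, of q] by (simp add: pq)
    moreover have "(- int q) mod tt n j \<noteq> 0"
      using neg_mod[of "int q" "tt n j"] \<open>0 < q\<close> \<open>q < ?t\<close> ttt by simp
    ultimately show "pt PN rN sN cN dN ?l nn \<noteq> sN ?l" using sl by simp
  qed
  have iso: "isolated PN rN sN cN dN ?l"
    unfolding isolated_def
  proof (intro conjI allI impI ballI)
    fix nn :: "nat \<times> nat" and \<mu> assume nn: "nn \<le> dN ?l" and \<mu>: "\<mu> \<in> PN" "rN \<mu> = rN ?l \<and> dN \<mu> = nn"
    obtain p q where pq: "nn = (p,q)" by (cases nn)
    have pq2: "p = 0" "q \<le> ?t" using nn dl by (auto simp: pq less_eq_prod_def)
    obtain x where x: "x \<in> Pm" "\<mu> = to_nat x" using \<mu>(1) by (auto simp: PN_def)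
    obtain w es b where xx: "x = (w,es,b)" by (cases x rule: prod_cases3)
    have "w = (n,j,0)" "es = []" "b = q" using \<mu> x rl pq pq2 by (auto simp: xx)
    then have \<mu>e: "\<mu> = to_nat (vp (n,j,0) q)" using x xx by simp
    have v1: "vvalid (shv (- int q) (n,j,0))" using shv_valid[OF v0] .
    show "\<mu> = seg PN rN sN cN dN ?l 0 nn"
    proof (rule sym, rule seg_eq[OF tgN, where a = "to_nat (vp (n,j,0) 0)" and b = "to_nat (vp (shv (- int q) (n,j,0)) (?t - q))"])
      show "?l \<in> PN" by (rule lP)
      show "to_nat (vp (n,j,0) 0) \<in> PN" "\<mu> \<in> PN" "to_nat (vp (shv (- int q) (n,j,0)) (?t - q)) \<in> PN"
        using v0 v1 \<mu>(1) by (auto simp del: shv.simps vvalid.simps)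
      show "dN (to_nat (vp (n,j,0) 0)) = 0" by (simp add: zero_prod_def)
      show "dN \<mu> = nn - 0" using \<mu> by simp
      show "dN (to_nat (vp (shv (- int q) (n,j,0)) (?t - q))) = dN ?l - nn" using dl pq pq2 by simp
      show "sN (to_nat (vp (n,j,0) 0)) = rN \<mu>" using \<mu>e by simp
      show "sN \<mu> = rN (to_nat (vp (shv (- int q) (n,j,0)) (?t - q)))" using \<mu>e by (simp del: shv.simps)
      show "cN (cN (to_nat (vp (n,j,0) 0)) \<mu>) (to_nat (vp (shv (- int q) (n,j,0)) (?t - q))) = ?l"
        using \<mu>e pq2 by (simp add: cyc_def del: shv.simps)
      show "0 \<le> nn" by (simp add: zero_prod_def less_eq_prod_def)
      show "nn \<le> dN ?l" by (rule nn)
    qed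
  next
    fix nn :: "nat \<times> nat" and \<mu> assume nn: "nn \<le> dN ?l" and \<mu>: "\<mu> \<in> PN" "sN \<mu> = sN ?l \<and> dN \<mu> = nn"
    obtain p q where pq: "nn = (p,q)" by (cases nn)
    have pq2: "p = 0" "q \<le> ?t" using nn dl by (auto simp: pq less_eq_prod_def)
    obtain x where x: "x \<in> Pm" "\<mu> = to_nat x" using \<mu>(1) by (auto simp: PN_def)
    obtain w es b where xx: "x = (w,es,b)" by (cases x rule: prod_cases3)
    have h: "vvalid w" "es = []" "b = q" "shv (- int q) w = (n,j,0)" using \<mu> x sl pq pq2 by (auto simp: xx simp del: shv.simps vvalid.simps)
    let ?w = "shv (- int (?t - q)) (n,j,0)"
    have "w = shv (int q) (shv (- int q) w)" using shv_inv2[OF h(1)] by simp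
    also have "\<dots> = shv (int q) (n,j,0)" using h(4) by simp
    also have "\<dots> = ?w" using pq2 ttt by (simp add: of_nat_diff minus_mod_self2)
    finally have ww: "w = ?w" .
    then have \<mu>e: "\<mu> = to_nat (vp ?w q)" using x xx h by simp
    have v1: "vvalid ?w" using shv_valid[OF v0] .
    have sw: "shv (- int q) ?w = (n,j,0)" using h(4) ww by simp
    show "\<mu> = seg PN rN sN cN dN ?l (dN ?l - nn) (dN ?l)"
    proof (rule sym, rule seg_eq[OF tgN, where a = "to_nat (vp (n,j,0) (?t - q))" and b = "to_nat (vp (n,j,0) 0)"])
      show "?l \<in> PN" by (rule lP)
      show "to_nat (vp (n,j,0) (?t - q)) \<in> PN" "\<mu> \<in> PN" "to_nat (vp (n,j,0) 0) \<in> PN"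
        using v0 \<mu>(1) by (auto simp del: shv.simps vvalid.simps)
      show "dN (to_nat (vp (n,j,0) (?t - q))) = dN ?l - nn" using dl pq pq2 by simp
      show "dN \<mu> = dN ?l - (dN ?l - nn)" using \<mu> dl pq pq2 by simp
      show "dN (to_nat (vp (n,j,0) 0)) = dN ?l - dN ?l" by (simp add: zero_prod_def)
      show "sN (to_nat (vp (n,j,0) (?t - q))) = rN \<mu>" using \<mu>e by (simp del: shv.simps)
      show "sN \<mu> = rN (to_nat (vp (n,j,0) 0))" using \<mu>e sw by (simp del: shv.simps)
      show "cN (cN (to_nat (vp (n,j,0) (?t - q))) \<mu>) (to_nat (vp (n,j,0) 0)) = ?l"
        using \<mu>e pq2 by (simp add: cyc_def del: shv.simps)
      show "dN ?l - nn \<le> dN ?l" using dl pq by (simp add: less_eq_prod_def)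
      show "dN ?l \<le> dN ?l" by simp
    qed
  qed
  show ?thesis unfolding iso_red_cycle_def using cyc iso dl by simp
qed

lemma cyc_verts_eq:
  assumes j: "j \<in> {1..cn n}"
  shows "cyc_verts PN rN sN cN dN (cyc n j) = WN n j"
proof -
  have ttt: "tt n j = int (T n j j)" by (simp add: tt_def)
  have dl: "dN (cyc n j) = (0, T n j j)" by (simp add: cyc_def)
  have tp: "0 < tt n j" using ttpos[OF j] .
  show ?thesis
  proof
    show "cyc_verts PN rN sN cN dN (cyc n j) \<subseteq> WN n j"
    proof
      fix y assume "y \<in> cyc_verts PN rN sN cN dN (cyc n j)"
      then obtain nn where nn: "nn \<le> dN (cyc n j)" "y = pt PN rN sN cN dN (cyc n j) nn"
        by (auto simp: cyc_verts_def)
      obtain p q where pq: "nn = (p,q)" by (cases nn)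
      have "p = 0" "q \<le> T n j j" using nn dl by (auto simp: pq less_eq_prod_def)
      then have "y = to_nat (vp (shv (- int q) (n,j,0)) 0)" using pt_cyc[OF j] nn pq by simp
      then show "y \<in> WN n j" using tp by (simp add: WN_mem)
    qed
    show "WN n j \<subseteq> cyc_verts PN rN sN cN dN (cyc n j)"
    proof
      fix y assume "y \<in> WN n j"
      then obtain x where x: "0 \<le> x" "x < tt n j" "y = to_nat (vp (n,j,x) 0)" using WN_elem by blast
      define q where "q = nat (tt n j - x)"
      have q: "q \<le> T n j j" "int q = tt n j - x" using x ttt by (auto simp: q_def)
      have "(- int q) mod tt n j = x"
        using q x by (simp add: minus_mod_self2)
      then have "y = pt PN rN sN cN dN (cyc n j) (0,q)" using pt_cyc[OF j q(1)] x by simp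
      moreover have "(0,q) \<le> dN (cyc n j)" using dl q by (simp add: less_eq_prod_def)
      ultimately show "y \<in> cyc_verts PN rN sN cN dN (cyc n j)" by (auto simp: cyc_verts_def)
    qed
  qed
qed

end


lemma count_mod:
  fixes x t :: int
  assumes x0: "0 \<le> x" and xt: "x < t"
  shows "card {k::int. 0 \<le> k \<and> k < int q * t \<and> k mod t = x} = q"
proof -
  have tp: "0 < t" using x0 xt by simp
  have "{k::int. 0 \<le> k \<and> k < int q * t \<and> k mod t = x} = (\<lambda>p. x + t * p) ` {0..<int q}"
  proof
    show "{k. 0 \<le> k \<and> k < int q * t \<and> k mod t = x} \<subseteq> (\<lambda>p. x + t * p) ` {0..<int q}"
    proof
      fix k assume k: "k \<in> {k. 0 \<le> k \<and> k < int q * t \<and> k mod t = x}"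
      have k1: "0 \<le> k" "k < t * int q" "k mod t = x" using k by (auto simp: mult.commute)
      have h: "t * (k div t) + k mod t = k" by (rule mult_div_mod_eq)
      have e: "k = x + t * (k div t)" using h k1(3) by linarith
      have "0 \<le> k div t" using k1 tp by (simp add: pos_imp_zdiv_nonneg_iff)
      moreover have "k div t < int q"
      proof (rule ccontr)
        assume "\<not> k div t < int q"
        then have "int q \<le> k div t" by linarith
        then have "t * int q \<le> t * (k div t)" using tp by (intro mult_left_mono) auto
        then show False using k1 e x0 by linarith
      qed
      ultimately show "k \<in> (\<lambda>p. x + t * p) ` {0..<int q}" using e by (intro image_eqI[of _ _ "k div t"]) auto
    qed
    show "(\<lambda>p. x + t * p) ` {0..<int q} \<subseteq> {k. 0 \<le> k \<and> k < int q * t \<and> k mod t = x}"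
    proof
      fix y assume "y \<in> (\<lambda>p. x + t * p) ` {0..<int q}"
      then obtain p where p: "0 \<le> p" "p < int q" "y = x + t * p" by auto
      have "p + 1 \<le> int q" using p by linarith
      then have "t * (p + 1) \<le> t * int q" using tp by (intro mult_left_mono) auto
      moreover have "t * (p + 1) = t * p + t" by (simp add: distrib_left)
      moreover have "int q * t = t * int q" by (simp add: mult.commute)
      ultimately have "y < int q * t" using p xt by linarith
      moreover have "y mod t = x" using p x0 xt by simp
      moreover have "0 \<le> t * p" using p tp by simp
      then have "0 \<le> y" using p x0 by linarith
      ultimately show "y \<in> {k. 0 \<le> k \<and> k < int q * t \<and> k mod t = x}" by simp
    qed
  qed
  moreover have "card ((\<lambda>p. x + t * p) ` {0..<int q}) = q"
    by (subst card_image) (use tp in \<open>auto simp: inj_on_def\<close>)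
  ultimately show ?thesis by simp
qed

context bd begin

lemma VN_mem: "vvalid (n,j,x) \<Longrightarrow> to_nat (vp (n,j,x) 0) \<in> VN n"
  by (auto simp: VN_def WN_mem)

lemma cardA:
  assumes i: "i \<in> {1..cn (Suc n)}" and j: "j \<in> {1..cn n}" and v: "v \<in> WN n j"
  shows "A n i j = card {e\<in>PN. dN e = (1,0) \<and> rN e = v \<and> sN e \<in> WN (Suc n) i}"
proof -
  obtain x where x: "0 \<le> x" "x < tt n j" "v = to_nat (vp (n,j,x) 0)" using WN_elem[OF v] by blast
  let ?K = "{k::int. 0 \<le> k \<and> k < int (A n i j) * tt n j \<and> k mod tt n j = x}"
  have "{e\<in>PN. dN e = (1,0) \<and> rN e = v \<and> sN e \<in> WN (Suc n) i} = (\<lambda>k. blueE (n,i,j,k)) ` ?K"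
  proof
    show "{e\<in>PN. dN e = (1,0) \<and> rN e = v \<and> sN e \<in> WN (Suc n) i} \<subseteq> (\<lambda>k. blueE (n,i,j,k)) ` ?K"
    proof
      fix e assume e: "e \<in> {e\<in>PN. dN e = (1,0) \<and> rN e = v \<and> sN e \<in> WN (Suc n) i}"
      then obtain ed where ed: "evalid ed" "e = blueE ed" using blue_char by blast
      obtain n' i' j' k where edd: "ed = (n',i',j',k)" by (cases ed rule: prod_cases4)
      have "n' = n" "j' = j" "k mod tt n j = x" using e ed x by (auto simp: edd blueE_simps)
      moreover have "i' = i" using e ed by (auto simp: edd blueE_simps WN_mem)
      ultimately have "k \<in> ?K" "e = blueE (n,i,j,k)" using ed by (auto simp: edd NN_def tt_def)
      then show "e \<in> (\<lambda>k. blueE (n,i,j,k)) ` ?K" by blast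
    qed
    show "(\<lambda>k. blueE (n,i,j,k)) ` ?K \<subseteq> {e\<in>PN. dN e = (1,0) \<and> rN e = v \<and> sN e \<in> WN (Suc n) i}"
    proof
      fix e assume "e \<in> (\<lambda>k. blueE (n,i,j,k)) ` ?K"
      then obtain k where k: "k \<in> ?K" "e = blueE (n,i,j,k)" by blast
      have ev: "evalid (n,i,j,k)" using k i j by (simp add: NN_def tt_def)
      have "0 \<le> k mod tt (Suc n) i" "k mod tt (Suc n) i < tt (Suc n) i" using ttpos[OF i] by auto
      then show "e \<in> {e\<in>PN. dN e = (1,0) \<and> rN e = v \<and> sN e \<in> WN (Suc n) i}"
        using k ev x by (simp add: blueE_simps WN_mem del: evalid.simps)
    qed
  qed
  moreover have "card ((\<lambda>k. blueE (n,i,j,k)) ` ?K) = card ?K"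
    by (rule card_image) (simp add: inj_on_def blueE_inj)
  moreover have "card ?K = A n i j" using count_mod x by blast
  ultimately show ?thesis by simp
qed

lemma cardB:
  assumes i: "i \<in> {1..cn (Suc n)}" and j: "j \<in> {1..cn n}" and w: "w \<in> WN (Suc n) i"
  shows "B n i j = card {e\<in>PN. dN e = (1,0) \<and> rN e \<in> WN n j \<and> sN e = w}"
proof -
  obtain y where y: "0 \<le> y" "y < tt (Suc n) i" "w = to_nat (vp (Suc n,i,y) 0)" using WN_elem[OF w] by blast
  let ?K = "{k::int. 0 \<le> k \<and> k < int (B n i j) * tt (Suc n) i \<and> k mod tt (Suc n) i = y}"
  have NB: "NN n i j = int (B n i j) * tt (Suc n) i" using NN_B[OF i j] .
  have "{e\<in>PN. dN e = (1,0) \<and> rN e \<in> WN n j \<and> sN e = w} = (\<lambda>k. blueE (n,i,j,k)) ` ?K"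
  proof
    show "{e\<in>PN. dN e = (1,0) \<and> rN e \<in> WN n j \<and> sN e = w} \<subseteq> (\<lambda>k. blueE (n,i,j,k)) ` ?K"
    proof
      fix e assume e: "e \<in> {e\<in>PN. dN e = (1,0) \<and> rN e \<in> WN n j \<and> sN e = w}"
      then obtain ed where ed: "evalid ed" "e = blueE ed" using blue_char by blast
      obtain n' i' j' k where edd: "ed = (n',i',j',k)" by (cases ed rule: prod_cases4)
      have "n' = n" "i' = i" "k mod tt (Suc n) i = y" using e ed y by (auto simp: edd blueE_simps)
      moreover have "j' = j" using e ed by (auto simp: edd blueE_simps WN_mem)
      ultimately have "k \<in> ?K" "e = blueE (n,i,j,k)" using ed NB by (auto simp: edd)
      then show "e \<in> (\<lambda>k. blueE (n,i,j,k)) ` ?K" by blast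
    qed
    show "(\<lambda>k. blueE (n,i,j,k)) ` ?K \<subseteq> {e\<in>PN. dN e = (1,0) \<and> rN e \<in> WN n j \<and> sN e = w}"
    proof
      fix e assume "e \<in> (\<lambda>k. blueE (n,i,j,k)) ` ?K"
      then obtain k where k: "k \<in> ?K" "e = blueE (n,i,j,k)" by blast
      have ev: "evalid (n,i,j,k)" using k i j NB by simp
      have "0 \<le> k mod tt n j" "k mod tt n j < tt n j" using ttpos[OF j] by auto
      then show "e \<in> {e\<in>PN. dN e = (1,0) \<and> rN e \<in> WN n j \<and> sN e = w}"
        using k ev y by (simp add: blueE_simps WN_mem del: evalid.simps)
    qed
  qed
  moreover have "card ((\<lambda>k. blueE (n,i,j,k)) ` ?K) = card ?K"
    by (rule card_image) (simp add: inj_on_def blueE_inj)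
  moreover have "card ?K = B n i j" using count_mod y by blast
  ultimately show ?thesis by simp
qed

lemma Fmap_blue:
  assumes ev: "evalid ed"
  shows "Fmap PN rN sN cN dN (blueE ed) = blueE (she 1 ed)"
proof -
  have ev1: "evalid (she 1 ed)" using she_valid[OF ev] .
  have vr: "vvalid (erng ed)" using erng_valid[OF ev] .
  have vs1: "vvalid (esrc (she 1 ed))" using esrc_valid[OF ev1] .
  have vr1: "vvalid (shv 1 (erng ed))" using shv_valid[OF vr] .
  show ?thesis
  proof (rule Fmap_eq[OF tgN, where fz = "to_nat (vp (shv 1 (erng ed)) 1)" and a = 1
        and fr = "to_nat (vp (esrc (she 1 ed)) 1)"])
    show "to_nat (vp (shv 1 (erng ed)) 1) \<in> PN" using vr1 by (simp del: vvalid.simps shv.simps)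
    show "dN (to_nat (vp (shv 1 (erng ed)) 1)) = (0,1)" by simp
    show "sN (to_nat (vp (shv 1 (erng ed)) 1)) = rN (blueE ed)"
      using shv_inv[OF vr, of 1] by (simp add: blueE_simps del: shv.simps)
    show "f = to_nat (vp (shv 1 (erng ed)) 1)"
      if fh: "f \<in> PN" "dN f = (0,1)" "sN f = rN (blueE ed)" for f
    proof -
      obtain w where w: "vvalid w" "f = to_nat (vp w 1)" using red_char fh(1,2) by blast
      have "shv (- 1) w = erng ed" using fh w by (simp add: blueE_simps del: shv.simps)
      then have "w = shv 1 (erng ed)" using shv_inv2[OF w(1), of 1] by simp
      then show ?thesis using w by simp
    qed
    show "blueE ed \<in> PN" using ev by (simp add: blueE_simps)
    show "dN (blueE ed) = (1,0)" by (simp add: blueE_simps)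
    show "blueE (she 1 ed) \<in> PN" using ev1 by (simp add: blueE_simps)
    show "to_nat (vp (esrc (she 1 ed)) 1) \<in> PN" using vs1 by (simp del: vvalid.simps esrc.simps)
    show "dN (to_nat (vp (esrc (she 1 ed)) 1)) = (0,1)" by simp
    show "dN (blueE (she 1 ed)) = (1,0)" by (simp add: blueE_simps)
    show "sN (blueE (she 1 ed)) = rN (to_nat (vp (esrc (she 1 ed)) 1))"
      using ev1 by (simp add: blueE_simps del: esrc.simps)
    show "cN (to_nat (vp (shv 1 (erng ed)) 1)) (blueE ed) = cN (blueE (she 1 ed)) (to_nat (vp (esrc (she 1 ed)) 1))"
      by (simp add: blueE_def erng_she del: shv.simps she.simps erng.simps)
  qed
qed

lemma Fpow:
  assumes ev: "evalid ed"
  shows "(Fmap PN rN sN cN dN ^^ m) (blueE ed) = blueE (she (int m) ed)"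
proof (induction m)
  case 0 then show ?case using she_0[OF ev] by simp
next
  case (Suc m)
  have "(Fmap PN rN sN cN dN ^^ Suc m) (blueE ed) = Fmap PN rN sN cN dN (blueE (she (int m) ed))"
    using Suc by simp
  also have "\<dots> = blueE (she 1 (she (int m) ed))" using Fmap_blue she_valid[OF ev] by blast
  also have "\<dots> = blueE (she (int (Suc m)) ed)" by (simp add: she_add add.commute del: she.simps)
  finally show ?case .
qed

lemma she_fix:
  assumes ev: "evalid (n,i,j,k)"
  shows "she (int m) (n,i,j,k) = (n,i,j,k) \<longleftrightarrow> NN n i j dvd int m"
proof -
  have "(k + int m) mod NN n i j = k \<longleftrightarrow> (k + int m) mod NN n i j = k mod NN n i j"
    using ev by simp
  also have "\<dots> \<longleftrightarrow> NN n i j dvd int m" by (simp add: mod_eq_dvd_iff)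
  finally show ?thesis by simp
qed

lemma ord_blue:
  assumes ev: "evalid (n,i,j,k)"
  shows "(\<exists>m>0. (Fmap PN rN sN cN dN ^^ m) (blueE (n,i,j,k)) = blueE (n,i,j,k)) \<and>
         ordF PN rN sN cN dN (blueE (n,i,j,k)) = A n i j * T n j j"
proof -
  have Np: "0 < NN n i j" using ev by simp
  have eq: "(Fmap PN rN sN cN dN ^^ m) (blueE (n,i,j,k)) = blueE (n,i,j,k) \<longleftrightarrow> NN n i j dvd int m" for m
    using Fpow[OF ev, of m] she_fix[OF ev, of m] by (simp add: blueE_inj)
  let ?N = "A n i j * T n j j"
  have NN: "NN n i j = int ?N" by (simp add: NN_def)
  have Npos: "0 < ?N" using Np unfolding NN by (simp only: of_nat_0_less_iff)
  have "ordF PN rN sN cN dN (blueE (n,i,j,k)) = ?N"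
    unfolding ordF_def
  proof (rule Least_equality)
    show "0 < ?N \<and> (Fmap PN rN sN cN dN ^^ ?N) (blueE (n,i,j,k)) = blueE (n,i,j,k)"
      using eq Npos NN by simp
    show "?N \<le> y" if "0 < y \<and> (Fmap PN rN sN cN dN ^^ y) (blueE (n,i,j,k)) = blueE (n,i,j,k)" for y
    proof -
      have "int ?N dvd int y" using that eq NN by simp
      then have "?N dvd y" by (simp only: of_nat_dvd_iff)
      then show ?thesis using that by (simp add: dvd_imp_le)
    qed
  qed
  moreover have "\<exists>m>0. (Fmap PN rN sN cN dN ^^ m) (blueE (n,i,j,k)) = blueE (n,i,j,k)"
    using eq Npos NN by (intro exI[of _ ?N]) simp
  ultimately show ?thesis by simp
qed

end


context bd begin

lemma brat: "bratteli2 PN rN sN cN dN VN"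
  unfolding bratteli2_def
proof (intro conjI allI ballI impI)
  show "two_graph PN rN sN cN dN" by (rule tgN)
  show "row_finite PN rN dN" by (rule rfN)
  fix n show "VN n \<noteq> {}" by (rule VN_ne)
next
  fix n show "finite (VN n)" by (rule VN_fin)
next
  fix m n :: nat assume "m \<noteq> n" then show "VN m \<inter> VN n = {}" by (rule VN_disj)
next
  show "(\<Union>n. VN n) = verts PN dN" by (rule verts_N[symmetric])
next
  fix e assume e: "e \<in> PN" "dN e = (1,0)"
  then obtain ed where ed: "evalid ed" "e = blueE ed" using blue_char by blast
  obtain n i j k where edd: "ed = (n,i,j,k)" by (cases ed rule: prod_cases4)
  have "rN e \<in> VN n" using ed erng_valid[OF ed(1)] by (simp add: edd blueE_simps VN_mem del: vvalid.simps)
  moreover have "sN e \<in> VN (Suc n)" using ed esrc_valid[OF ed(1)] by (simp add: edd blueE_simps VN_mem del: vvalid.simps evalid.simps)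
  ultimately show "\<exists>n. rN e \<in> VN n \<and> sN e \<in> VN (Suc n)" by blast
next
  fix v assume v: "v \<in> verts PN dN" and ne: "\<not> (\<exists>e\<in>PN. dN e = (1,0) \<and> sN e = v)"
  have "v \<in> PN" "dN v = 0" using v by (auto simp: verts_def)
  then obtain w where w: "vvalid w" "v = to_nat (vp w 0)" using vert_char by blast
  obtain m j y where ww: "w = (m,j,y)" by (cases w rule: prod_cases3)
  show "v \<in> VN 0"
  proof (cases m)
    case 0 then show ?thesis using w ww VN_mem by simp
  next
    case (Suc m')
    have j: "j \<in> {1..cn (Suc m')}" "0 \<le> y" "y < tt (Suc m') j" using w ww Suc by auto
    then obtain j' where j': "j' \<in> {1..cn m'}" "B m' j j' \<noteq> 0" using Bprop unfolding proper_mat_def by blast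
    have "tt (Suc m') j \<le> NN m' j j'" using NN_B[OF j(1) j'(1)] j'(2) ttpos[OF j(1)]
      by (simp add: mult_le_cancel_right1)
    then have ev: "evalid (m',j,j',y)" using j j' by simp
    have "esrc (m',j,j',y) = w" using j ww Suc by simp
    then have "sN (blueE (m',j,j',y)) = v" using ev w by (simp add: blueE_simps del: esrc.simps evalid.simps)
    then show ?thesis using ne ev blueE_simps by blast
  qed
next
  fix v assume v: "v \<in> verts PN dN"
  have "v \<in> PN" "dN v = 0" using v by (auto simp: verts_def)
  then obtain w where w: "vvalid w" "v = to_nat (vp w 0)" using vert_char by blast
  obtain m j y where ww: "w = (m,j,y)" by (cases w rule: prod_cases3)
  have j: "j \<in> {1..cn m}" "0 \<le> y" "y < tt m j" using w ww by auto
  then obtain i where i: "i \<in> {1..cn (Suc m)}" "A m i j \<noteq> 0" using Aprop unfolding proper_mat_def by blast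
  have "tt m j \<le> NN m i j" using i(2) ttpos[OF j(1)] by (simp add: NN_def tt_def)
  then have ev: "evalid (m,i,j,y)" using j i by simp
  have "erng (m,i,j,y) = w" using j ww by simp
  then have "rN (blueE (m,i,j,y)) = v" using w by (simp add: blueE_simps del: erng.simps)
  then show "\<exists>e\<in>PN. dN e = (1,0) \<and> rN e = v" using ev blueE_simps by blast
next
  fix v assume v: "v \<in> verts PN dN"
  then obtain n where "v \<in> VN n" using verts_N by auto
  then obtain j where j: "j \<in> {1..cn n}" "v \<in> WN n j" by (auto simp: VN_def)
  then show "\<exists>l. iso_red_cycle PN rN sN cN dN l \<and> v \<in> cyc_verts PN rN sN cN dN l"
    using iso_cyc cyc_verts_eq by blast
next
  fix f assume f: "f \<in> PN" "dN f = (0,1)"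
  then obtain w where w: "vvalid w" "f = to_nat (vp w 1)" using red_char by blast
  obtain m j y where ww: "w = (m,j,y)" by (cases w rule: prod_cases3)
  have "rN f \<in> VN m" using w ww VN_mem by simp
  moreover have "vvalid (shv (-1) w)" using shv_valid[OF w(1)] .
  then have "sN f \<in> VN m" using w ww VN_mem by (simp del: vvalid.simps)
  ultimately show "\<exists>n. rN f \<in> VN n \<and> sN f \<in> VN n" by blast
qed

lemma main:
  "\<exists>(P :: nat set) r s c d V (W :: nat \<Rightarrow> nat \<Rightarrow> nat set).
           bratteli2 P r s c d V \<and>
           (\<forall>n. (\<forall>j\<in>{1..cn n}. \<exists>l. iso_red_cycle P r s c d l \<and> cyc_verts P r s c d l = W n j) \<and>
                (\<forall>i\<in>{1..cn n}. \<forall>j\<in>{1..cn n}. i \<noteq> j \<longrightarrow> W n i \<inter> W n j = {}) \<and>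
                (\<Union>j\<in>{1..cn n}. W n j) = V n) \<and>
           (\<forall>n. \<forall>i\<in>{1..cn (Suc n)}. \<forall>j\<in>{1..cn n}. \<forall>v\<in>W n j.
              A n i j = card {e\<in>P. d e = (1,0) \<and> r e = v \<and> s e \<in> W (Suc n) i}) \<and>
           (\<forall>n. \<forall>i\<in>{1..cn (Suc n)}. \<forall>j\<in>{1..cn n}. \<forall>w\<in>W (Suc n) i.
              B n i j = card {e\<in>P. d e = (1,0) \<and> r e \<in> W n j \<and> s e = w}) \<and>
           (\<forall>n. \<forall>i\<in>{1..cn n}. \<forall>j\<in>{1..cn n}. T n i j = (if i = j then card (W n j) else 0)) \<and>
           (\<forall>n. \<forall>i\<in>{1..cn (Suc n)}. \<forall>j\<in>{1..cn n}. \<forall>e\<in>P.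
              d e = (1,0) \<and> r e \<in> W n j \<and> s e \<in> W (Suc n) i \<longrightarrow>
                (\<exists>k>0. (Fmap P r s c d ^^ k) e = e) \<and>
                ordF P r s c d e = A n i j * card (W n j))"
proof (rule exI[of _ PN], rule exI[of _ rN], rule exI[of _ sN], rule exI[of _ cN], rule exI[of _ dN],
    rule exI[of _ VN], rule exI[of _ WN], intro conjI allI ballI impI)
  show "bratteli2 PN rN sN cN dN VN" by (rule brat)
next
  fix n j assume "j \<in> {1..cn n}"
  then show "\<exists>l. iso_red_cycle PN rN sN cN dN l \<and> cyc_verts PN rN sN cN dN l = WN n j"
    using iso_cyc cyc_verts_eq by blast
next
  fix n i j :: nat assume "i \<noteq> j" then show "WN n i \<inter> WN n j = {}" by (rule WN_disj)
next
  fix n show "(\<Union>j\<in>{1..cn n}. WN n j) = VN n" by (simp add: VN_def)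
next
  fix n i j v assume "i \<in> {1..cn (Suc n)}" "j \<in> {1..cn n}" "v \<in> WN n j"
  then show "A n i j = card {e\<in>PN. dN e = (1,0) \<and> rN e = v \<and> sN e \<in> WN (Suc n) i}" by (rule cardA)
next
  fix n i j w assume "i \<in> {1..cn (Suc n)}" "j \<in> {1..cn n}" "w \<in> WN (Suc n) i"
  then show "B n i j = card {e\<in>PN. dN e = (1,0) \<and> rN e \<in> WN n j \<and> sN e = w}" by (rule cardB)
next
  fix n i j assume "i \<in> {1..cn n}" "j \<in> {1..cn n}"
  then show "T n i j = (if i = j then card (WN n j) else 0)" using Tdiag card_WN by auto
next
  fix n i j e assume i: "i \<in> {1..cn (Suc n)}" and j: "j \<in> {1..cn n}" and e: "e \<in> PN"
    and h: "dN e = (1,0) \<and> rN e \<in> WN n j \<and> sN e \<in> WN (Suc n) i"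
  obtain ed where ed: "evalid ed" "e = blueE ed" using blue_char e h by blast
  obtain n' i' j' k where edd: "ed = (n',i',j',k)" by (cases ed rule: prod_cases4)
  have "n' = n" "j' = j" using h ed by (auto simp: edd blueE_simps WN_mem)
  moreover have "i' = i" using h ed by (auto simp: edd blueE_simps WN_mem)
  ultimately have ee: "e = blueE (n,i,j,k)" "evalid (n,i,j,k)" using ed edd by auto
  show "\<exists>k>0. (Fmap PN rN sN cN dN ^^ k) e = e" using ord_blue[OF ee(2)] ee(1) by blast
  show "ordF PN rN sN cN dN e = A n i j * card (WN n j)" using ord_blue[OF ee(2)] ee(1) card_WN by simp
qed

end

theorem proposition6p4:
  fixes cn :: "nat \<Rightarrow> nat"
    and A B T :: "nat \<Rightarrow> nat \<Rightarrow> nat \<Rightarrow> nat"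
  assumes cpos: "\<forall>n. 0 < cn n"
    and Aprop: "\<forall>n. proper_mat (cn (Suc n)) (cn n) (A n)"
    and Bprop: "\<forall>n. proper_mat (cn (Suc n)) (cn n) (B n)"
    and Tprop: "\<forall>n. proper_mat (cn n) (cn n) (T n)"
    and Tdiag: "\<forall>n. \<forall>i\<in>{1..cn n}. \<forall>j\<in>{1..cn n}. i \<noteq> j \<longrightarrow> T n i j = 0"
    and ATTB: "\<forall>n. \<forall>i\<in>{1..cn (Suc n)}. \<forall>j\<in>{1..cn n}.
                 (\<Sum>k=1..cn n. A n i k * T n k j) = (\<Sum>k=1..cn (Suc n). T (Suc n) i k * B n k j)"
  shows "\<exists>(P :: nat set) r s c d V (W :: nat \<Rightarrow> nat \<Rightarrow> nat set).
           bratteli2 P r s c d V \<and>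
           (\<forall>n. (\<forall>j\<in>{1..cn n}. \<exists>l. iso_red_cycle P r s c d l \<and> cyc_verts P r s c d l = W n j) \<and>
                (\<forall>i\<in>{1..cn n}. \<forall>j\<in>{1..cn n}. i \<noteq> j \<longrightarrow> W n i \<inter> W n j = {}) \<and>
                (\<Union>j\<in>{1..cn n}. W n j) = V n) \<and>
           (\<forall>n. \<forall>i\<in>{1..cn (Suc n)}. \<forall>j\<in>{1..cn n}. \<forall>v\<in>W n j.
              A n i j = card {e\<in>P. d e = (1,0) \<and> r e = v \<and> s e \<in> W (Suc n) i}) \<and>
           (\<forall>n. \<forall>i\<in>{1..cn (Suc n)}. \<forall>j\<in>{1..cn n}. \<forall>w\<in>W (Suc n) i.
              B n i j = card {e\<in>P. d e = (1,0) \<and> r e \<in> W n j \<and> s e = w}) \<and>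
           (\<forall>n. \<forall>i\<in>{1..cn n}. \<forall>j\<in>{1..cn n}. T n i j = (if i = j then card (W n j) else 0)) \<and>
           (\<forall>n. \<forall>i\<in>{1..cn (Suc n)}. \<forall>j\<in>{1..cn n}. \<forall>e\<in>P.
              d e = (1,0) \<and> r e \<in> W n j \<and> s e \<in> W (Suc n) i \<longrightarrow>
                (\<exists>k>0. (Fmap P r s c d ^^ k) e = e) \<and>
                ordF P r s c d e = A n i j * card (W n j))"
proof -
  interpret bd cn A B T
    by (rule bd.intro) (use assms in auto)
  show ?thesis by (rule main)
qed


end
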